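(* Let $q>0$ and let $u\in C^{4}(\mathbb{R}^{2})$, $u>0$, solve $\Delta^{2}u+u^{-q}=0$ in $\mathbb{R}^{2}$. Then for all $r>0$: $\bar u'(r)>0$, $\bar u''(r)>0$, $\bar u'''(r)<0$, and $\bar w'(r)<0$.
   Context: $w:=\Delta u$. For a function $f$ on $\mathbb{R}^{2}$, $\bar f(r)$ denotes its spherical average over $\partial B_{r}(0)$ ($\bar f(0)=f(0)$); derivatives are with respect to $r$. *)

theory Defs
  imports "HOL-Analysis.Analysis"
begin

definition px :: "(real \<times> real \<Rightarrow> real) \<Rightarrow> real \<times> real \<Rightarrow> real" where
  "px f z = deriv (\<lambda>t. f (t, snd z)) (fst z)"

definition py :: "(real \<times> real \<Rightarrow> real) \<Rightarrow> real \<times> real \<Rightarrow> real" where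
  "py f z = deriv (\<lambda>t. f (fst z, t)) (snd z)"

fun Ck :: "nat \<Rightarrow> (real \<times> real \<Rightarrow> real) \<Rightarrow> bool" where
  "Ck 0 f = continuous_on UNIV f"
| "Ck (Suc k) f = (continuous_on UNIV f \<and>
      (\<forall>z. (\<lambda>t. f (t, snd z)) differentiable (at (fst z)) \<and>
           (\<lambda>t. f (fst z, t)) differentiable (at (snd z))) \<and>
      Ck k (px f) \<and> Ck k (py f))"

definition laplacian :: "(real \<times> real \<Rightarrow> real) \<Rightarrow> real \<times> real \<Rightarrow> real" where
  "laplacian f = (\<lambda>z. px (px f) z + py (py f) z)"

definition sph_avg :: "(real \<times> real \<Rightarrow> real) \<Rightarrow> real \<Rightarrow> real" where
  "sph_avg f r = integral {0..2*pi} (\<lambda>\<theta>. f (r * cos \<theta>, r * sin \<theta>)) / (2*pi)"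

end

theory Submission imports Defs begin

lemma mvt_any:
  fixes g :: "real \<Rightarrow> real"
  assumes "\<And>t. (g has_real_derivative g' t) (at t)"
  shows "\<exists>\<xi>. \<bar>\<xi> - a\<bar> \<le> \<bar>b - a\<bar> \<and> g b - g a = (b - a) * g' \<xi>"
proof (cases a b rule: linorder_cases)
  case less
  then obtain z where "a < z" "z < b" "g b - g a = (b - a) * g' z"
    using MVT2[of a b g g'] assms by blast
  then show ?thesis by (intro exI[of _ z]) auto
next
  case equal then show ?thesis by auto
next
  case greater
  then obtain z where "b < z" "z < a" "g a - g b = (a - b) * g' z"
    using MVT2[of b a g g'] assms by blast
  then show ?thesis by (intro exI[of _ z]) (auto simp: algebra_simps)
qed

lemma partials_frechet:
  fixes f :: "real \<times> real \<Rightarrow> real"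
  assumes dx: "\<And>x y. ((\<lambda>t. f (t, y)) has_real_derivative fx (x, y)) (at x)"
    and dy: "((\<lambda>t. f (xo, t)) has_real_derivative fy (xo, yo)) (at yo)"
    and cx: "continuous_on UNIV fx"
  shows "(f has_derivative (\<lambda>p. fx (xo,yo) * fst p + fy (xo,yo) * snd p)) (at (xo,yo))"
  unfolding has_derivative_at_alt
proof (intro conjI allI impI)
  show "bounded_linear (\<lambda>p. fx (xo,yo) * fst p + fy (xo,yo) * snd p)"
    by (intro bounded_linear_add bounded_linear_mult_right[THEN bounded_linear_compose] bounded_linear_fst bounded_linear_snd)
  fix e :: real assume e: "e > 0"
  obtain d1 where d1: "d1 > 0" "\<And>p. dist p (xo,yo) < d1 \<Longrightarrow> dist (fx p) (fx (xo,yo)) < e/2"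
    using cx e unfolding continuous_on_iff by (metis UNIV_I half_gt_zero)
  obtain d2 where d2: "d2 > 0" "\<And>y. norm (y - yo) < d2 \<Longrightarrow>
      norm (f (xo, y) - f (xo, yo) - fy (xo,yo) * (y - yo)) \<le> e/2 * norm (y - yo)"
    using dy e unfolding has_field_derivative_def has_derivative_at_alt by (metis half_gt_zero)
  show "\<exists>d>0. \<forall>p. norm (p - (xo, yo)) < d \<longrightarrow>
      norm (f p - f (xo, yo) - (fx (xo, yo) * fst (p - (xo, yo)) + fy (xo, yo) * snd (p - (xo, yo))))
      \<le> e * norm (p - (xo, yo))"
  proof (intro exI[of _ "min d1 d2"] conjI allI impI)
    show "min d1 d2 > 0" using d1 d2 by simp
    fix p :: "real \<times> real" assume p: "norm (p - (xo, yo)) < min d1 d2"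
    obtain x y where pxy: "p = (x, y)" by (cases p)
    define h where "h = x - xo"
    define k where "k = y - yo"
    have nrm: "norm (p - (xo,yo)) = sqrt (h^2 + k^2)"
      by (simp add: pxy h_def k_def norm_Pair)
    have hle: "\<bar>h\<bar> \<le> norm (p - (xo,yo))" unfolding nrm by (simp add: real_le_rsqrt)
    have kle: "\<bar>k\<bar> \<le> norm (p - (xo,yo))" unfolding nrm by (simp add: real_le_rsqrt)
    obtain \<xi> where xi: "\<bar>\<xi> - xo\<bar> \<le> \<bar>x - xo\<bar>" "f (x, y) - f (xo, y) = (x - xo) * fx (\<xi>, y)"
      using mvt_any[of "\<lambda>t. f (t, y)" "\<lambda>t. fx (t, y)" xo x] dx by blast
    have "(\<xi> - xo)^2 \<le> h^2" using xi(1) unfolding h_def by (simp add: abs_le_square_iff)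
    then have "dist (\<xi>, y) (xo, yo) \<le> norm (p - (xo,yo))"
      unfolding nrm by (simp add: dist_Pair_Pair dist_real_def k_def)
    then have "dist (\<xi>, y) (xo, yo) < d1" using p by simp
    then have e1: "\<bar>fx (\<xi>, y) - fx (xo,yo)\<bar> \<le> e/2" using d1(2)[of "(\<xi>, y)"] by (simp add: dist_real_def)
    have "norm (y - yo) < d2" using kle p by (simp add: k_def)
    then have e2: "\<bar>f (xo, y) - f (xo, yo) - fy (xo,yo) * k\<bar> \<le> e/2 * \<bar>k\<bar>"
      using d2(2) by (simp add: k_def)
    have "f p - f (xo, yo) - (fx (xo, yo) * fst (p - (xo, yo)) + fy (xo, yo) * snd (p - (xo, yo)))
       = h * (fx (\<xi>, y) - fx (xo,yo)) + (f (xo, y) - f (xo, yo) - fy (xo,yo) * k)"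
      using xi(2) by (simp add: pxy h_def k_def algebra_simps)
    also have "\<bar>\<dots>\<bar> \<le> \<bar>h\<bar> * (e/2) + e/2 * \<bar>k\<bar>"
    proof -
      have "\<bar>h * (fx (\<xi>, y) - fx (xo,yo))\<bar> \<le> \<bar>h\<bar> * (e/2)"
        unfolding abs_mult by (rule mult_left_mono) (use e1 in auto)
      then show ?thesis using e2 abs_triangle_ineq[of "h * (fx (\<xi>, y) - fx (xo,yo))"
          "f (xo, y) - f (xo, yo) - fy (xo,yo) * k"] by linarith
    qed
    also have "\<dots> \<le> e * norm (p - (xo,yo))"
    proof -
      have "\<bar>h\<bar> * (e/2) \<le> norm (p - (xo,yo)) * (e/2)" using hle e by (simp add: mult_right_mono)
      moreover have "e/2 * \<bar>k\<bar> \<le> e/2 * norm (p - (xo,yo))" using kle e by (simp add: mult_left_mono)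
      ultimately show ?thesis by (simp add: algebra_simps)
    qed
    finally show "norm (f p - f (xo, yo) - (fx (xo, yo) * fst (p - (xo, yo)) + fy (xo, yo) * snd (p - (xo, yo))))
      \<le> e * norm (p - (xo, yo))" by simp
  qed
qed

lemma chain2:
  fixes f :: "real \<times> real \<Rightarrow> real"
  assumes dx: "\<And>x y. ((\<lambda>t. f (t, y)) has_real_derivative fx (x, y)) (at x)"
    and dy: "\<And>x y. ((\<lambda>t. f (x, t)) has_real_derivative fy (x, y)) (at y)"
    and cx: "continuous_on UNIV fx"
    and da: "(a has_real_derivative a') (at r)" and db: "(b has_real_derivative b') (at r)"
  shows "((\<lambda>r. f (a r, b r)) has_real_derivative fx (a r, b r) * a' + fy (a r, b r) * b') (at r)"
proof -
  have F: "(f has_derivative (\<lambda>p. fx (a r, b r) * fst p + fy (a r, b r) * snd p)) (at (a r, b r))"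
    by (rule partials_frechet[where xo="a r" and yo="b r" and f=f and fx=fx and fy=fy, OF dx dy cx])
  have P: "((\<lambda>r. (a r, b r)) has_derivative (\<lambda>h. (a' * h, b' * h))) (at r)"
    using da db unfolding has_field_derivative_def by (rule has_derivative_Pair)
  have "((\<lambda>r. f (a r, b r)) has_derivative
      (\<lambda>h. fx (a r, b r) * fst (a' * h, b' * h) + fy (a r, b r) * snd (a' * h, b' * h))) (at r)"
    using has_derivative_compose[OF P F] by simp
  moreover have "(\<lambda>h. fx (a r, b r) * fst (a' * h, b' * h) + fy (a r, b r) * snd (a' * h, b' * h))
     = (*) (fx (a r, b r) * a' + fy (a r, b r) * b')"
    by (rule ext) (simp add: algebra_simps)
  ultimately show ?thesis unfolding has_field_derivative_def by simp
qed



lemma Ck_cont: "Ck k f \<Longrightarrow> continuous_on UNIV f"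
  by (cases k) auto

lemma Ck_derivs:
  assumes "Ck (Suc k) f"
  shows "((\<lambda>t. f (t, y)) has_real_derivative px f (x, y)) (at x)"
    and "((\<lambda>t. f (x, t)) has_real_derivative py f (x, y)) (at y)"
proof -
  from assms have "(\<lambda>t. f (t, snd (x,y))) differentiable (at (fst (x,y)))"
     "(\<lambda>t. f (fst (x,y), t)) differentiable (at (snd (x,y)))" by auto
  then show "((\<lambda>t. f (t, y)) has_real_derivative px f (x, y)) (at x)"
    "((\<lambda>t. f (x, t)) has_real_derivative py f (x, y)) (at y)"
    by (auto simp: px_def py_def DERIV_deriv_iff_real_differentiable)
qed

lemma Ck_mono: "Ck (Suc k) f \<Longrightarrow> Ck k f"
proof (induction k arbitrary: f)
  case 0 then show ?case by simp
next
  case (Suc k)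
  have h: "continuous_on UNIV f \<and>
      (\<forall>z. (\<lambda>t. f (t, snd z)) differentiable (at (fst z)) \<and>
           (\<lambda>t. f (fst z, t)) differentiable (at (snd z))) \<and>
      Ck (Suc k) (px f) \<and> Ck (Suc k) (py f)"
    using Suc.prems by (subst (asm) Ck.simps(2))
  show ?case unfolding Ck.simps(2) using h Suc.IH by blast
qed

lemma Ck_add: "Ck k f \<Longrightarrow> Ck k g \<Longrightarrow> Ck k (\<lambda>z. f z + g z)"
proof (induction k arbitrary: f g)
  case 0 then show ?case by (auto intro: continuous_on_add)
next
  case (Suc k)
  have pxa: "px (\<lambda>z. f z + g z) = (\<lambda>z. px f z + px g z)"
  proof (rule ext)
    fix z :: "real \<times> real"
    obtain x y where z: "z = (x, y)" by (cases z)
    have "((\<lambda>t. f (t, y) + g (t, y)) has_real_derivative px f (x,y) + px g (x,y)) (at x)"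
      by (rule DERIV_add) (rule Ck_derivs(1), rule Suc.prems)+
    then show "px (\<lambda>z. f z + g z) z = px f z + px g z"
      unfolding z by (subst px_def) (simp add: DERIV_imp_deriv)
  qed
  have pya: "py (\<lambda>z. f z + g z) = (\<lambda>z. py f z + py g z)"
  proof (rule ext)
    fix z :: "real \<times> real"
    obtain x y where z: "z = (x, y)" by (cases z)
    have "((\<lambda>t. f (x, t) + g (x, t)) has_real_derivative py f (x,y) + py g (x,y)) (at y)"
      by (rule DERIV_add) (rule Ck_derivs(2), rule Suc.prems)+
    then show "py (\<lambda>z. f z + g z) z = py f z + py g z"
      unfolding z by (subst py_def) (simp add: DERIV_imp_deriv)
  qed
  have h1: "continuous_on UNIV f \<and>
      (\<forall>z. (\<lambda>t. f (t, snd z)) differentiable (at (fst z)) \<and>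
           (\<lambda>t. f (fst z, t)) differentiable (at (snd z))) \<and>
      Ck k (px f) \<and> Ck k (py f)"
    using Suc.prems by (subst (asm) Ck.simps(2))
  have h2: "continuous_on UNIV g \<and>
      (\<forall>z. (\<lambda>t. g (t, snd z)) differentiable (at (fst z)) \<and>
           (\<lambda>t. g (fst z, t)) differentiable (at (snd z))) \<and>
      Ck k (px g) \<and> Ck k (py g)"
    using Suc.prems by (subst (asm) Ck.simps(2))
  show ?case unfolding Ck.simps(2) pxa pya
    using h1 h2 Suc.IH by (auto intro: continuous_on_add differentiable_add)
qed

definition C2 :: "(real \<times> real \<Rightarrow> real) \<Rightarrow> bool" where
  "C2 f \<longleftrightarrow>
   (\<forall>x y. ((\<lambda>t. f (t, y)) has_real_derivative px f (x, y)) (at x) \<and>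
          ((\<lambda>t. f (x, t)) has_real_derivative py f (x, y)) (at y) \<and>
          ((\<lambda>t. px f (t, y)) has_real_derivative px (px f) (x, y)) (at x) \<and>
          ((\<lambda>t. px f (x, t)) has_real_derivative py (px f) (x, y)) (at y) \<and>
          ((\<lambda>t. py f (t, y)) has_real_derivative px (py f) (x, y)) (at x) \<and>
          ((\<lambda>t. py f (x, t)) has_real_derivative py (py f) (x, y)) (at y)) \<and>
   continuous_on UNIV f \<and> continuous_on UNIV (px f) \<and> continuous_on UNIV (py f) \<and>
   continuous_on UNIV (px (px f)) \<and> continuous_on UNIV (py (px f)) \<and>
   continuous_on UNIV (px (py f)) \<and> continuous_on UNIV (py (py f))"

lemma Ck2_C2:
  assumes "Ck 2 f" shows "C2 f"
proof -
  have A: "Ck (Suc (Suc 0)) f" using assms by (simp add: numeral_2_eq_2)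
  then have B: "Ck (Suc 0) (px f)" "Ck (Suc 0) (py f)" by auto
  have C: "Ck 0 (px (px f))" "Ck 0 (py (px f))" "Ck 0 (px (py f))" "Ck 0 (py (py f))"
    using B by (subst (asm) Ck.simps(2), blast)+
  show ?thesis unfolding C2_def
    using Ck_derivs[OF A] Ck_derivs[OF B(1)] Ck_derivs[OF B(2)] Ck_cont[OF A] Ck_cont[OF B(1)]
      Ck_cont[OF B(2)] Ck_cont[OF C(1)] Ck_cont[OF C(2)] Ck_cont[OF C(3)] Ck_cont[OF C(4)]
    by blast
qed

lemma cont_polar:
  fixes F :: "real \<times> real \<Rightarrow> real"
  assumes "continuous_on UNIV F"
  shows "continuous_on S (\<lambda>p. F (fst p * cos (snd p), fst p * sin (snd p)))"
  by (rule continuous_on_compose2[OF assms]) (auto intro!: continuous_intros)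

lemma cont_polar1:
  fixes F :: "real \<times> real \<Rightarrow> real"
  assumes "continuous_on UNIV F"
  shows "continuous_on S (\<lambda>\<theta>. F (r * cos \<theta>, r * sin \<theta>))"
  by (rule continuous_on_compose2[OF assms]) (auto intro!: continuous_intros)

lemma chain_radial:
  fixes g :: "real \<times> real \<Rightarrow> real"
  assumes dx: "\<And>x y. ((\<lambda>t. g (t, y)) has_real_derivative gx (x, y)) (at x)"
    and dy: "\<And>x y. ((\<lambda>t. g (x, t)) has_real_derivative gy (x, y)) (at y)"
    and cx: "continuous_on UNIV gx"
  shows "((\<lambda>r. g (r * cos \<theta>, r * sin \<theta>)) has_real_derivative
      gx (r * cos \<theta>, r * sin \<theta>) * cos \<theta> + gy (r * cos \<theta>, r * sin \<theta>) * sin \<theta>) (at r)"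
  by (rule chain2[OF dx dy cx]) (auto intro!: derivative_eq_intros)

lemma chain_angular:
  fixes g :: "real \<times> real \<Rightarrow> real"
  assumes dx: "\<And>x y. ((\<lambda>t. g (t, y)) has_real_derivative gx (x, y)) (at x)"
    and dy: "\<And>x y. ((\<lambda>t. g (x, t)) has_real_derivative gy (x, y)) (at y)"
    and cx: "continuous_on UNIV gx"
  shows "((\<lambda>\<theta>. g (r * cos \<theta>, r * sin \<theta>)) has_real_derivative
      gx (r * cos \<theta>, r * sin \<theta>) * (- (r * sin \<theta>)) + gy (r * cos \<theta>, r * sin \<theta>) * (r * cos \<theta>)) (at \<theta>)"
  by (rule chain2[OF dx dy cx]) (auto intro!: derivative_eq_intros)


definition dA :: "(real \<times> real \<Rightarrow> real) \<Rightarrow> real \<Rightarrow> real" where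
  "dA f r = integral {0..2*pi} (\<lambda>\<theta>. px f (r * cos \<theta>, r * sin \<theta>) * cos \<theta>
      + py f (r * cos \<theta>, r * sin \<theta>) * sin \<theta>) / (2*pi)"

definition ddA :: "(real \<times> real \<Rightarrow> real) \<Rightarrow> real \<Rightarrow> real" where
  "ddA f r = integral {0..2*pi} (\<lambda>\<theta>.
      (px (px f) (r * cos \<theta>, r * sin \<theta>) * cos \<theta> + py (px f) (r * cos \<theta>, r * sin \<theta>) * sin \<theta>) * cos \<theta>
    + (px (py f) (r * cos \<theta>, r * sin \<theta>) * cos \<theta> + py (py f) (r * cos \<theta>, r * sin \<theta>) * sin \<theta>) * sin \<theta>) / (2*pi)"

lemma C2D:
  assumes "C2 f"
  shows "\<And>x y. ((\<lambda>t. f (t, y)) has_real_derivative px f (x, y)) (at x)"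
    "\<And>x y. ((\<lambda>t. f (x, t)) has_real_derivative py f (x, y)) (at y)"
    "\<And>x y. ((\<lambda>t. px f (t, y)) has_real_derivative px (px f) (x, y)) (at x)"
    "\<And>x y. ((\<lambda>t. px f (x, t)) has_real_derivative py (px f) (x, y)) (at y)"
    "\<And>x y. ((\<lambda>t. py f (t, y)) has_real_derivative px (py f) (x, y)) (at x)"
    "\<And>x y. ((\<lambda>t. py f (x, t)) has_real_derivative py (py f) (x, y)) (at y)"
    "continuous_on UNIV f" "continuous_on UNIV (px f)" "continuous_on UNIV (py f)"
    "continuous_on UNIV (px (px f))" "continuous_on UNIV (py (px f))"
    "continuous_on UNIV (px (py f))" "continuous_on UNIV (py (py f))"
  using assms unfolding C2_def by blast+

lemma avg_deriv1:
  assumes "C2 f"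
  shows "(sph_avg f has_real_derivative dA f r) (at r)"
proof -
  note c = C2D[OF assms]
  have "((\<lambda>r. integral (cbox 0 (2*pi)) (\<lambda>\<theta>. f (r * cos \<theta>, r * sin \<theta>))) has_field_derivative
      integral (cbox 0 (2*pi)) (\<lambda>\<theta>. px f (r * cos \<theta>, r * sin \<theta>) * cos \<theta>
      + py f (r * cos \<theta>, r * sin \<theta>) * sin \<theta>)) (at r within UNIV)"
  proof (rule leibniz_rule_field_derivative[where
        fx="\<lambda>r \<theta>. px f (r * cos \<theta>, r * sin \<theta>) * cos \<theta> + py f (r * cos \<theta>, r * sin \<theta>) * sin \<theta>"])
    fix x t show "((\<lambda>x. f (x * cos t, x * sin t)) has_field_derivative
        px f (x * cos t, x * sin t) * cos t + py f (x * cos t, x * sin t) * sin t) (at x within UNIV)"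
      using chain_radial[OF c(1) c(2) c(8)] by simp
  next
    fix x show "(\<lambda>t. f (x * cos t, x * sin t)) integrable_on cbox 0 (2 * pi)"
      by (intro integrable_continuous cont_polar1 c)
  next
    show "continuous_on (UNIV \<times> cbox 0 (2 * pi))
      (\<lambda>(x, t). px f (x * cos t, x * sin t) * cos t + py f (x * cos t, x * sin t) * sin t)"
      unfolding case_prod_beta' by (intro continuous_intros cont_polar c)
  qed auto
  from DERIV_cdivide[OF this, of "2*pi"] show ?thesis
    by (simp add: sph_avg_def[abs_def] dA_def cbox_interval)
qed

lemma avg_deriv2:
  assumes "C2 f"
  shows "(dA f has_real_derivative ddA f r) (at r)"
proof -
  note c = C2D[OF assms]
  have "((\<lambda>r. integral (cbox 0 (2*pi)) (\<lambda>\<theta>. px f (r * cos \<theta>, r * sin \<theta>) * cos \<theta>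
      + py f (r * cos \<theta>, r * sin \<theta>) * sin \<theta>)) has_field_derivative
      integral (cbox 0 (2*pi)) (\<lambda>\<theta>.
      (px (px f) (r * cos \<theta>, r * sin \<theta>) * cos \<theta> + py (px f) (r * cos \<theta>, r * sin \<theta>) * sin \<theta>) * cos \<theta>
    + (px (py f) (r * cos \<theta>, r * sin \<theta>) * cos \<theta> + py (py f) (r * cos \<theta>, r * sin \<theta>) * sin \<theta>) * sin \<theta>))
      (at r within UNIV)"
  proof (rule leibniz_rule_field_derivative[where
        fx="\<lambda>r \<theta>. (px (px f) (r * cos \<theta>, r * sin \<theta>) * cos \<theta> + py (px f) (r * cos \<theta>, r * sin \<theta>) * sin \<theta>) * cos \<theta>
    + (px (py f) (r * cos \<theta>, r * sin \<theta>) * cos \<theta> + py (py f) (r * cos \<theta>, r * sin \<theta>) * sin \<theta>) * sin \<theta>"])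
    fix x t show "((\<lambda>x. px f (x * cos t, x * sin t) * cos t + py f (x * cos t, x * sin t) * sin t) has_field_derivative
        (px (px f) (x * cos t, x * sin t) * cos t + py (px f) (x * cos t, x * sin t) * sin t) * cos t
    + (px (py f) (x * cos t, x * sin t) * cos t + py (py f) (x * cos t, x * sin t) * sin t) * sin t) (at x within UNIV)"
      using DERIV_add[OF DERIV_cmult_right[OF chain_radial[OF c(3) c(4) c(10)]]
          DERIV_cmult_right[OF chain_radial[OF c(5) c(6) c(12)]]] by simp
  next
    fix x show "(\<lambda>t. px f (x * cos t, x * sin t) * cos t + py f (x * cos t, x * sin t) * sin t) integrable_on cbox 0 (2 * pi)"
      by (intro integrable_continuous continuous_intros cont_polar1 c)
  next
    show "continuous_on (UNIV \<times> cbox 0 (2 * pi))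
      (\<lambda>(x, t). (px (px f) (x * cos t, x * sin t) * cos t + py (px f) (x * cos t, x * sin t) * sin t) * cos t
    + (px (py f) (x * cos t, x * sin t) * cos t + py (py f) (x * cos t, x * sin t) * sin t) * sin t)"
      unfolding case_prod_beta' by (intro continuous_intros cont_polar c)
  qed auto
  from DERIV_cdivide[OF this, of "2*pi"] show ?thesis
    by (simp add: ddA_def dA_def[abs_def] cbox_interval)
qed


lemma alg_id:
  fixes a11 a21 a12 a22 b1 b2 c s r :: real
  assumes "c * c + s * s = 1"
  shows "r^2 * ((a11 * c + a21 * s) * c + (a12 * c + a22 * s) * s) + r * (b1 * c + b2 * s)
    + (((a11 * (-(r * s)) + a21 * (r * c)) * (-(r * s)) + (-(r * c)) * b1) + ((a12 * (-(r * s)) + a22 * (r * c)) * (r * c) + (-(r * s)) * b2))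
    = r^2 * (a11 + a22)"
proof -
  have "r^2 * ((a11 * c + a21 * s) * c + (a12 * c + a22 * s) * s) + r * (b1 * c + b2 * s)
    + (((a11 * (-(r * s)) + a21 * (r * c)) * (-(r * s)) + (-(r * c)) * b1) + ((a12 * (-(r * s)) + a22 * (r * c)) * (r * c) + (-(r * s)) * b2))
    = r^2 * (a11 + a22) * (c * c + s * s)"
    by (simp add: algebra_simps power2_eq_square)
  then show ?thesis using assms by simp
qed

lemma avg_identity:
  assumes "C2 f" "r > 0"
  shows "r * ddA f r + dA f r = r * sph_avg (laplacian f) r"
proof -
  note c = C2D[OF assms(1)]
  define T where "T \<theta> = px f (r * cos \<theta>, r * sin \<theta>) * (- (r * sin \<theta>)) + py f (r * cos \<theta>, r * sin \<theta>) * (r * cos \<theta>)" for \<theta>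
  define eE where "eE \<theta> = (px (px f) (r * cos \<theta>, r * sin \<theta>) * cos \<theta> + py (px f) (r * cos \<theta>, r * sin \<theta>) * sin \<theta>) * cos \<theta>
    + (px (py f) (r * cos \<theta>, r * sin \<theta>) * cos \<theta> + py (py f) (r * cos \<theta>, r * sin \<theta>) * sin \<theta>) * sin \<theta>" for \<theta>
  define eD where "eD \<theta> = px f (r * cos \<theta>, r * sin \<theta>) * cos \<theta> + py f (r * cos \<theta>, r * sin \<theta>) * sin \<theta>" for \<theta>
  define eL where "eL \<theta> = laplacian f (r * cos \<theta>, r * sin \<theta>)" for \<theta>
  define T' where "T' \<theta> = ((px (px f) (r * cos \<theta>, r * sin \<theta>) * (-(r * sin \<theta>)) + py (px f) (r * cos \<theta>, r * sin \<theta>) * (r * cos \<theta>)) * (-(r * sin \<theta>))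
        + (-(r * cos \<theta>)) * px f (r * cos \<theta>, r * sin \<theta>))
      + ((px (py f) (r * cos \<theta>, r * sin \<theta>) * (-(r * sin \<theta>)) + py (py f) (r * cos \<theta>, r * sin \<theta>) * (r * cos \<theta>)) * (r * cos \<theta>)
        + (-(r * sin \<theta>)) * py f (r * cos \<theta>, r * sin \<theta>))" for \<theta>
  have d1: "((\<lambda>\<theta>. - (r * sin \<theta>)) has_real_derivative - (r * cos \<theta>)) (at \<theta>)" for \<theta>
    by (auto intro!: derivative_eq_intros)
  have d2: "((\<lambda>\<theta>. r * cos \<theta>) has_real_derivative - (r * sin \<theta>)) (at \<theta>)" for \<theta>
    by (auto intro!: derivative_eq_intros)
  have dT: "(T has_real_derivative T' \<theta>) (at \<theta>)" for \<theta>
    unfolding T_def T'_def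
    by (rule DERIV_add[OF DERIV_mult[OF chain_angular[OF c(3) c(4) c(10)] d1]
          DERIV_mult[OF chain_angular[OF c(5) c(6) c(12)] d2]])
  have "(T' has_integral (T (2*pi) - T 0)) {0..2*pi}"
    by (rule fundamental_theorem_of_calculus)
       (auto simp: has_real_derivative_iff_has_vector_derivative[symmetric] intro: has_field_derivative_at_within dT)
  then have iT: "(T' has_integral 0) {0..2*pi}" by (simp add: T_def)
  have iE: "(eE has_integral integral {0..2*pi} eE) {0..2*pi}"
    unfolding eE_def by (intro integrable_integral integrable_continuous_interval continuous_intros cont_polar1 c)
  have iD: "(eD has_integral integral {0..2*pi} eD) {0..2*pi}"
    unfolding eD_def by (intro integrable_integral integrable_continuous_interval continuous_intros cont_polar1 c)
  have cL: "continuous_on UNIV (laplacian f)"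
    unfolding laplacian_def by (intro continuous_intros continuous_on_add c)
  have iL: "(eL has_integral integral {0..2*pi} eL) {0..2*pi}"
    unfolding eL_def by (intro integrable_integral integrable_continuous_interval continuous_intros cont_polar1 cL)
  have "((\<lambda>\<theta>. r^2 * eE \<theta> + r * eD \<theta> + T' \<theta>) has_integral
      (r^2 * integral {0..2*pi} eE + r * integral {0..2*pi} eD + 0)) {0..2*pi}"
    by (intro has_integral_add has_integral_mult_right iE iD iT)
  moreover have "(\<lambda>\<theta>. r^2 * eE \<theta> + r * eD \<theta> + T' \<theta>) = (\<lambda>\<theta>. r^2 * eL \<theta>)"
  proof (rule ext)
    fix \<theta>
    show "r^2 * eE \<theta> + r * eD \<theta> + T' \<theta> = r^2 * eL \<theta>"
      unfolding eE_def eD_def T'_def eL_def laplacian_def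
      by (rule alg_id) (simp add: power2_eq_square[symmetric])
  qed
  ultimately have "((\<lambda>\<theta>. r^2 * eL \<theta>) has_integral
      (r^2 * integral {0..2*pi} eE + r * integral {0..2*pi} eD)) {0..2*pi}" by simp
  moreover have "((\<lambda>\<theta>. r^2 * eL \<theta>) has_integral (r^2 * integral {0..2*pi} eL)) {0..2*pi}"
    by (intro has_integral_mult_right iL)
  ultimately have key: "r^2 * integral {0..2*pi} eE + r * integral {0..2*pi} eD = r^2 * integral {0..2*pi} eL"
    by (rule has_integral_unique)
  have "ddA f r = integral {0..2*pi} eE / (2*pi)" unfolding ddA_def eE_def ..
  moreover have "dA f r = integral {0..2*pi} eD / (2*pi)" unfolding dA_def eD_def ..
  moreover have "sph_avg (laplacian f) r = integral {0..2*pi} eL / (2*pi)" unfolding sph_avg_def eL_def ..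
  moreover have k2: "r * integral {0..2*pi} eE + integral {0..2*pi} eD = r * integral {0..2*pi} eL"
  proof -
    have "r * (r * integral {0..2*pi} eE + integral {0..2*pi} eD) = r * (r * integral {0..2*pi} eL)"
      using key by (simp add: power2_eq_square algebra_simps)
    then show ?thesis using assms(2) by simp
  qed
  ultimately show ?thesis
  proof -
    assume e1: "ddA f r = integral {0..2*pi} eE / (2*pi)" and e2: "dA f r = integral {0..2*pi} eD / (2*pi)"
      and e3: "sph_avg (laplacian f) r = integral {0..2*pi} eL / (2*pi)"
      and k2: "r * integral {0..2*pi} eE + integral {0..2*pi} eD = r * integral {0..2*pi} eL"
    have "r * ddA f r + dA f r = (r * integral {0..2*pi} eE + integral {0..2*pi} eD) / (2*pi)"
      unfolding e1 e2 by (simp add: add_divide_distrib)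
    also have "\<dots> = r * sph_avg (laplacian f) r" unfolding k2 e3 by simp
    finally show ?thesis .
  qed
qed

lemma nonincr:
  fixes f :: "real \<Rightarrow> real"
  assumes "a \<le> b"
    and "\<And>x. a \<le> x \<Longrightarrow> x \<le> b \<Longrightarrow> (f has_real_derivative f' x) (at x)"
    and "\<And>x. a \<le> x \<Longrightarrow> x \<le> b \<Longrightarrow> f' x \<le> 0"
  shows "f b \<le> f a"
proof (cases "a = b")
  case True then show ?thesis by simp
next
  case False
  then have "a < b" using assms(1) by simp
  then obtain z where z: "a < z" "z < b" "f b - f a = (b - a) * f' z"
    using MVT2[of a b f f'] assms(2) by blast
  have "(b - a) * f' z \<le> 0" using z assms(3)[of z] \<open>a < b\<close> by (simp add: mult_nonneg_nonpos)
  then show ?thesis using z by simp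
qed

lemma ode:
  fixes A D E Aw Dw Ew h :: "real \<Rightarrow> real"
  assumes dA: "\<And>r. (A has_real_derivative D r) (at r)"
    and dD: "\<And>r. (D has_real_derivative E r) (at r)"
    and dAw: "\<And>r. (Aw has_real_derivative Dw r) (at r)"
    and dDw: "\<And>r. (Dw has_real_derivative Ew r) (at r)"
    and cE: "continuous_on UNIV E"
    and idu: "\<And>r. r > 0 \<Longrightarrow> r * E r + D r = r * Aw r"
    and idw: "\<And>r. r > 0 \<Longrightarrow> r * Ew r + Dw r = r * h r"
    and hneg: "\<And>r. r > 0 \<Longrightarrow> h r < 0"
    and Apos: "\<And>r. A r \<ge> 0"
    and D0: "D 0 = 0"
  shows "\<And>r. r > 0 \<Longrightarrow> Dw r < 0"
    and "\<And>r. r > 0 \<Longrightarrow> (E has_real_derivative (Dw r - E r / r + D r / r^2)) (at r)"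
    and "\<And>r. r > 0 \<Longrightarrow> Dw r - E r / r + D r / r^2 < 0"
    and "\<And>r. r > 0 \<Longrightarrow> E r > 0"
    and "\<And>r. r > 0 \<Longrightarrow> D r > 0"
proof -
  show S1: "Dw r < 0" if r: "r > 0" for r
  proof -
    have dG: "((\<lambda>t. t * Dw t) has_real_derivative (1 * Dw t + Ew t * t)) (at t)" for t
      by (rule DERIV_mult[OF DERIV_ident dDw])
    obtain z where z: "0 < z" "z < r" "r * Dw r - 0 * Dw 0 = (r - 0) * (1 * Dw z + Ew z * z)"
      using MVT2[of 0 r "\<lambda>t. t * Dw t" "\<lambda>t. 1 * Dw t + Ew t * t"] dG r by blast
    have "1 * Dw z + Ew z * z = z * h z" using idw[of z] z by (simp add: algebra_simps)
    also have "\<dots> < 0" using hneg[of z] z by (simp add: mult_pos_neg)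
    finally have "r * Dw r < 0" using z r by (simp add: mult_pos_neg)
    then show ?thesis using r by (simp add: mult_less_0_iff)
  qed
  show S2: "(E has_real_derivative (Dw r - E r / r + D r / r^2)) (at r)" if r: "r > 0" for r
  proof -
    have "((\<lambda>t. Aw t - D t / t) has_real_derivative (Dw r - (E r * r - D r * 1) / (r * r))) (at r)"
      using r by (intro DERIV_diff DERIV_divide dAw dD DERIV_ident) simp
    then have d: "(E has_real_derivative (Dw r - (E r * r - D r * 1) / (r * r))) (at r)"
    proof (rule has_field_derivative_transform_within_open[where S="{0<..}"])
      fix x :: real assume "x \<in> {0<..}"
      then have "x > 0" by simp
      then show "Aw x - D x / x = E x" using idu[of x] by (simp add: field_simps)
    qed (use r in auto)
    have eq: "Dw r - (E r * r - D r * 1) / (r * r) = Dw r - E r / r + D r / r^2"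
      using r by (simp add: field_simps power2_eq_square)
    show ?thesis by (rule DERIV_cong[OF d eq])
  qed
  show S3: "Dw r - E r / r + D r / r^2 < 0" if r: "r > 0" for r
  proof -
    define K where "K t = t * t * t * Dw t - t * t * E t + t * D t" for t
    have dK: "(K has_real_derivative (t * t * Dw t + t * t * t * h t)) (at t)" if t: "t > 0" for t
    proof -
      have i: "((\<lambda>x. x) has_real_derivative 1) (at t)" by simp
      note m2 = DERIV_mult[OF i i]
      note m3 = DERIV_mult[OF m2 i]
      note all = DERIV_add[OF DERIV_diff[OF DERIV_mult[OF m3 dDw[of t]] DERIV_mult[OF m2 S2[OF t]]]
          DERIV_mult[OF i dD[of t]]]
      have e1: "(Dw t - E t / t + D t / t^2) * (t * t) = t * t * Dw t - t * E t + D t"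
        using t by (simp add: field_simps power2_eq_square)
      have e2a: "t * Ew t = t * h t - Dw t" using idw[OF t] by simp
      have e2: "Ew t * (t * t * t) = t * t * (t * h t - Dw t)"
        by (subst e2a[symmetric]) (simp add: algebra_simps)
      show ?thesis unfolding K_def
        by (rule DERIV_cong[OF all], unfold e1 e2) (simp add: algebra_simps)
    qed
    have cK: "continuous_on {0..r} K"
    proof -
      have "continuous_on {0..r} E" using cE by (rule continuous_on_subset) simp
      moreover have "continuous_on {0..r} Dw" "continuous_on {0..r} D"
        using dDw dD by (auto intro!: DERIV_isCont continuous_at_imp_continuous_on)
      ultimately show ?thesis unfolding K_def by (intro continuous_intros)
    qed
    obtain l z where z: "0 < z" "z < r" "DERIV K z :> l" "K r - K 0 = (r - 0) * l"
      using MVT[of 0 r K] r cK dK unfolding real_differentiable_def by fastforce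
    have "l = z * z * Dw z + z * z * z * h z" using DERIV_unique[OF z(3) dK[OF z(1)]] .
    also have "\<dots> < 0"
      using S1[OF z(1)] hneg[OF z(1)] z(1) by (simp add: add_neg_neg mult_pos_neg)
    finally have "K r < 0" using z r by (simp add: K_def mult_pos_neg)
    moreover have "K r = r * r * r * (Dw r - E r / r + D r / r^2)"
      unfolding K_def using r by (simp add: field_simps power2_eq_square)
    ultimately show ?thesis using r by (simp add: mult_less_0_iff)
  qed
  show S4: "E r > 0" if r: "r > 0" for r
  proof (rule ccontr)
    assume "\<not> E r > 0"
    then have Er: "E r \<le> 0" by simp
    define r1 where "r1 = r + 1"
    have dE: "(E has_real_derivative (Dw t - E t / t + D t / t^2)) (at t)" if "t \<ge> r" for t
      using S2 that r by simp
    have nE: "Dw t - E t / t + D t / t^2 \<le> 0" if "t \<ge> r" for t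
      using S3[of t] that r by simp
    obtain z where z: "r < z" "z < r1" "E r1 - E r = (r1 - r) * (Dw z - E z / z + D z / z^2)"
      using MVT2[of r r1 E "\<lambda>t. Dw t - E t / t + D t / t^2"] dE r1_def by force
    have "E r1 < 0" using z S3[of z] r Er unfolding r1_def by simp
    define c where "c = - E r1"
    have c: "c > 0" using \<open>E r1 < 0\<close> c_def by simp
    have Ebound: "E t \<le> - c" if "t \<ge> r1" for t
    proof -
      have "E t \<le> E r1"
      proof (rule nonincr[of r1 t E "\<lambda>x. Dw x - E x / x + D x / x^2"])
        show "r1 \<le> t" by fact
        fix x assume "r1 \<le> x" "x \<le> t"
        then have "r \<le> x" using r1_def by simp
        then show "(E has_real_derivative Dw x - E x / x + D x / x^2) (at x)"
          "Dw x - E x / x + D x / x^2 \<le> 0" using dE nE by auto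
      qed
      then show ?thesis using c_def by simp
    qed
    have Dbound: "D t + c * t \<le> D r1 + c * r1" if "t \<ge> r1" for t
    proof (rule nonincr[of r1 t "\<lambda>x. D x + c * x" "\<lambda>x. E x + c"])
      show "r1 \<le> t" by fact
      fix x assume x: "r1 \<le> x" "x \<le> t"
      show "((\<lambda>x. D x + c * x) has_real_derivative E x + c) (at x)"
        by (auto intro!: derivative_eq_intros dD)
      show "E x + c \<le> 0" using Ebound[OF x(1)] by simp
    qed
    define r2 where "r2 = r1 + (\<bar>D r1\<bar> + 1) / c"
    have r12: "r2 \<ge> r1" using c unfolding r2_def by simp
    have Dneg: "D t \<le> -1" if "t \<ge> r2" for t
    proof -
      have "t \<ge> r1" using that r12 by simp
      have "c * (t - r1) \<ge> c * ((\<bar>D r1\<bar> + 1) / c)"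
        using that c unfolding r2_def by (intro mult_left_mono) auto
      then have "c * (t - r1) \<ge> \<bar>D r1\<bar> + 1" using c by simp
      then show ?thesis using Dbound[OF \<open>t \<ge> r1\<close>] by (simp add: algebra_simps)
    qed
    define t where "t = r2 + A r2 + 1"
    have "t \<ge> r2" using Apos[of r2] t_def by simp
    have "A t + t \<le> A r2 + r2"
    proof (rule nonincr[of r2 t "\<lambda>x. A x + x" "\<lambda>x. D x + 1"])
      show "r2 \<le> t" by fact
      fix x assume x: "r2 \<le> x" "x \<le> t"
      show "((\<lambda>x. A x + x) has_real_derivative D x + 1) (at x)"
        by (auto intro!: derivative_eq_intros dA)
      show "D x + 1 \<le> 0" using Dneg[OF x(1)] by simp
    qed
    then have "A t \<le> -1" unfolding t_def by simp
    then show False using Apos[of t] by simp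
  qed
  show S5: "D r > 0" if r: "r > 0" for r
  proof -
    obtain z where z: "0 < z" "z < r" "D r - D 0 = (r - 0) * E z"
      using MVT2[of 0 r D E] dD r by blast
    then show ?thesis using S4[OF z(1)] D0 r by simp
  qed
qed


lemma ddA_cont:
  assumes "C2 f"
  shows "continuous_on UNIV (ddA f)"
proof -
  note c = C2D[OF assms]
  have "continuous_on UNIV (\<lambda>r. integral (cbox 0 (2*pi)) (\<lambda>\<theta>.
      (px (px f) (r * cos \<theta>, r * sin \<theta>) * cos \<theta> + py (px f) (r * cos \<theta>, r * sin \<theta>) * sin \<theta>) * cos \<theta>
    + (px (py f) (r * cos \<theta>, r * sin \<theta>) * cos \<theta> + py (py f) (r * cos \<theta>, r * sin \<theta>) * sin \<theta>) * sin \<theta>))"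
    by (rule integral_continuous_on_param) (unfold case_prod_beta', intro continuous_intros cont_polar c)
  then have "continuous_on UNIV (\<lambda>r. integral (cbox 0 (2*pi)) (\<lambda>\<theta>.
      (px (px f) (r * cos \<theta>, r * sin \<theta>) * cos \<theta> + py (px f) (r * cos \<theta>, r * sin \<theta>) * sin \<theta>) * cos \<theta>
    + (px (py f) (r * cos \<theta>, r * sin \<theta>) * cos \<theta> + py (py f) (r * cos \<theta>, r * sin \<theta>) * sin \<theta>) * sin \<theta>) / (2*pi))"
    by (intro continuous_intros) auto
  then show ?thesis by (simp add: ddA_def[abs_def] cbox_interval)
qed

lemma dA_zero: "dA f 0 = 0"
proof -
  have ic: "(cos has_integral (sin (2*pi) - sin 0)) {0..2*pi}"
    by (rule fundamental_theorem_of_calculus)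
       (auto simp: has_real_derivative_iff_has_vector_derivative[symmetric] intro!: derivative_eq_intros)
  have isin: "((\<lambda>x. sin x) has_integral ((- cos (2*pi)) - (- cos 0))) {0..2*pi}"
    by (rule fundamental_theorem_of_calculus[where f="\<lambda>x. - cos x"])
       (auto simp: has_real_derivative_iff_has_vector_derivative[symmetric] intro!: derivative_eq_intros)
  have "((\<lambda>\<theta>. px f (0,0) * cos \<theta> + py f (0,0) * sin \<theta>) has_integral (px f (0,0) * 0 + py f (0,0) * 0)) {0..2*pi}"
    using ic isin by (intro has_integral_add has_integral_mult_right) auto
  then have "integral {0..2*pi} (\<lambda>\<theta>. px f (0,0) * cos \<theta> + py f (0,0) * sin \<theta>) = 0"
    by (simp add: integral_unique)
  then show ?thesis by (simp add: dA_def mult.commute)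
qed

lemma avg_nonneg:
  assumes "continuous_on UNIV g" "\<And>z. g z \<ge> 0"
  shows "sph_avg g r \<ge> 0"
proof -
  have "integral {0..2*pi} (\<lambda>\<theta>. g (r * cos \<theta>, r * sin \<theta>)) \<ge> 0"
    by (rule integral_nonneg) (auto intro!: integrable_continuous_interval cont_polar1 assms)
  then show ?thesis by (simp add: sph_avg_def)
qed

lemma avg_neg:
  assumes "continuous_on UNIV g" "\<And>z. g z < 0"
  shows "sph_avg g r < 0"
proof -
  have cg: "continuous_on {0..2*pi} (\<lambda>\<theta>. g (r * cos \<theta>, r * sin \<theta>))"
    by (intro cont_polar1 assms)
  obtain x0 where x0: "x0 \<in> {0..2*pi}" "\<And>x. x \<in> {0..2*pi} \<Longrightarrow> g (r * cos x, r * sin x) \<le> g (r * cos x0, r * sin x0)"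
    using continuous_attains_sup[OF compact_Icc _ cg] by auto
  have "integral {0..2*pi} (\<lambda>\<theta>. g (r * cos \<theta>, r * sin \<theta>)) \<le> integral {0..2*pi} (\<lambda>\<theta>. g (r * cos x0, r * sin x0))"
    by (rule integral_le) (auto intro!: integrable_continuous_interval cg x0(2))
  also have "\<dots> = 2 * pi * g (r * cos x0, r * sin x0)" by simp
  also have "\<dots> < 0" using assms(2) by (simp add: mult_pos_neg)
  finally show ?thesis by (simp add: sph_avg_def divide_neg_pos)
qed

theorem mainTheorem13:
  fixes u :: "real \<times> real \<Rightarrow> real" and q :: real
  assumes "q > 0"
    and "Ck 4 u"
    and "\<forall>z. u z > 0"
    and "\<forall>z. laplacian (laplacian u) z + u z powr (- q) = 0"
  shows "\<forall>r > 0.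
     (sph_avg u has_real_derivative deriv (sph_avg u) r) (at r) \<and>
     (deriv (sph_avg u) has_real_derivative (deriv ^^ 2) (sph_avg u) r) (at r) \<and>
     ((deriv ^^ 2) (sph_avg u) has_real_derivative (deriv ^^ 3) (sph_avg u) r) (at r) \<and>
     (sph_avg (laplacian u) has_real_derivative deriv (sph_avg (laplacian u)) r) (at r) \<and>
     deriv (sph_avg u) r > 0 \<and>
     (deriv ^^ 2) (sph_avg u) r > 0 \<and>
     (deriv ^^ 3) (sph_avg u) r < 0 \<and>
     deriv (sph_avg (laplacian u)) r < 0"
proof -
  have n4: "(4::nat) = Suc (Suc (Suc (Suc 0)))" by simp
  have h4: "Ck (Suc (Suc (Suc (Suc 0)))) u" using assms(2) unfolding n4 .
  have h3: "Ck (Suc (Suc (Suc 0))) (px u)" "Ck (Suc (Suc (Suc 0))) (py u)"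
    using h4 by (subst (asm) Ck.simps(2), blast)+
  have h2: "Ck (Suc (Suc 0)) (px (px u))" "Ck (Suc (Suc 0)) (py (py u))"
    using h3 by (subst (asm) Ck.simps(2), blast)+
  have n2: "(2::nat) = Suc (Suc 0)" by simp
  have "Ck (Suc (Suc 0)) u" using Ck_mono[OF Ck_mono[OF h4]] .
  then have C2u: "C2 u" by (intro Ck2_C2) (simp only: n2)
  define w where "w = laplacian u"
  have w_eq: "w = (\<lambda>z. px (px u) z + py (py u) z)" unfolding w_def laplacian_def ..
  have "Ck (Suc (Suc 0)) w" unfolding w_eq by (rule Ck_add[OF h2])
  then have C2w: "C2 w" by (intro Ck2_C2) (simp only: n2)
  note cu = C2D[OF C2u] and cw = C2D[OF C2w]
  have cLw: "continuous_on UNIV (laplacian w)"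
    unfolding laplacian_def by (intro continuous_intros continuous_on_add cw)
  have Lneg: "laplacian w z < 0" for z
  proof -
    have "u z > 0" using assms(3) by blast
    then have "u z powr (- q) > 0" by simp
    moreover have "laplacian (laplacian u) z + u z powr (- q) = 0" using assms(4) by blast
    ultimately show ?thesis unfolding w_def by linarith
  qed
  have apos: "0 \<le> u z" for z using assms(3) less_imp_le by blast
  have f1: "(sph_avg u has_real_derivative dA u r) (at r)" for r by (rule avg_deriv1[OF C2u])
  have f2: "(dA u has_real_derivative ddA u r) (at r)" for r by (rule avg_deriv2[OF C2u])
  have f3: "(sph_avg w has_real_derivative dA w r) (at r)" for r by (rule avg_deriv1[OF C2w])
  have f4: "(dA w has_real_derivative ddA w r) (at r)" for r by (rule avg_deriv2[OF C2w])
  have f6: "r * ddA u r + dA u r = r * sph_avg w r" if "r > 0" for r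
    unfolding w_def by (rule avg_identity[OF C2u that])
  have f7: "r * ddA w r + dA w r = r * sph_avg (laplacian w) r" if "r > 0" for r
    by (rule avg_identity[OF C2w that])
  have f8: "sph_avg (laplacian w) r < 0" if "r > 0" for r by (rule avg_neg[OF cLw Lneg])
  have f9: "sph_avg u r \<ge> 0" for r by (rule avg_nonneg[OF cu(7) apos])
  note O0 = ode[OF f1 f2 f3 f4 ddA_cont[OF C2u] f6 f7 f8 f9 dA_zero]
  have O1: "dA w r < 0" if "r > 0" for r using O0(1) that by blast
  have O2: "(ddA u has_real_derivative (dA w r - ddA u r / r + dA u r / r^2)) (at r)" if "r > 0" for r
    using O0(2) that by blast
  have O3: "dA w r - ddA u r / r + dA u r / r^2 < 0" if "r > 0" for r using O0(3) that by blast
  have O4: "ddA u r > 0" if "r > 0" for r using O0(4) that by blast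
  have O5: "dA u r > 0" if "r > 0" for r using O0(5) that by blast
  have D1: "deriv (sph_avg u) = dA u" by (rule ext) (rule DERIV_imp_deriv[OF avg_deriv1[OF C2u]])
  have D2: "deriv (dA u) = ddA u" by (rule ext) (rule DERIV_imp_deriv[OF avg_deriv2[OF C2u]])
  have D1w: "deriv (sph_avg w) = dA w" by (rule ext) (rule DERIV_imp_deriv[OF avg_deriv1[OF C2w]])
  have F2: "(deriv ^^ 2) (sph_avg u) = ddA u" by (simp add: numeral_2_eq_2 D1 D2)
  have F3: "(deriv ^^ 3) (sph_avg u) = deriv (ddA u)" by (simp add: numeral_3_eq_3 D1 D2)
  show ?thesis
  proof (intro allI impI)
    fix r :: real assume r: "r > 0"
    note S2 = O2[OF r] and S3 = O3[OF r]
    show "(sph_avg u has_real_derivative deriv (sph_avg u) r) (at r) \<and>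
     (deriv (sph_avg u) has_real_derivative (deriv ^^ 2) (sph_avg u) r) (at r) \<and>
     ((deriv ^^ 2) (sph_avg u) has_real_derivative (deriv ^^ 3) (sph_avg u) r) (at r) \<and>
     (sph_avg (laplacian u) has_real_derivative deriv (sph_avg (laplacian u)) r) (at r) \<and>
     deriv (sph_avg u) r > 0 \<and>
     (deriv ^^ 2) (sph_avg u) r > 0 \<and>
     (deriv ^^ 3) (sph_avg u) r < 0 \<and>
     deriv (sph_avg (laplacian u)) r < 0"
      unfolding F2 F3 D1 D2 w_def[symmetric] D1w
      using f1 f2 f3 S2 S3 DERIV_imp_deriv[OF S2] O1[OF r] O4[OF r] O5[OF r]
      by auto
  qed
qed

end
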